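(* Let $\delta \geq \gamma > 0$ and let $G$ be a graph on $t$ vertices whose edges are coloured with $r$ colours, with minimum degree $\delta(G) \geq \delta t$. Then $G$ contains a spanning subgraph $R$ with $\delta(R) \geq (\delta - \gamma) t$ which is the union of at most $r^2/\gamma$ monochromatic components of $G$.
   Context: A monochromatic component of an edge-coloured graph $G$ is a connected component of the subgraph of $G$ consisting of all edges of a single colour (and their endpoints). $\delta(\cdot)$ denotes minimum degree. *)

theory Defs
  imports Complex_Main
begin

definition simple_graph :: "'a set \<Rightarrow> ('a \<Rightarrow> 'a \<Rightarrow> bool) \<Rightarrow> bool" where
  "simple_graph V E \<longleftrightarrow> finite V \<and> (\<forall>x y. E x y \<longrightarrow> x \<in> V \<and> y \<in> V \<and> x \<noteq> y \<and> E y x)"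

definition degree :: "'a set \<Rightarrow> ('a \<Rightarrow> 'a \<Rightarrow> bool) \<Rightarrow> 'a \<Rightarrow> nat" where
  "degree V E v = card {u \<in> V. E v u}"

definition edge_colouring :: "('a \<Rightarrow> 'a \<Rightarrow> bool) \<Rightarrow> nat \<Rightarrow> ('a \<Rightarrow> 'a \<Rightarrow> nat) \<Rightarrow> bool" where
  "edge_colouring E r c \<longleftrightarrow> (\<forall>x y. E x y \<longrightarrow> c x y < r \<and> c x y = c y x)"

definition mono_edge :: "('a \<Rightarrow> 'a \<Rightarrow> bool) \<Rightarrow> ('a \<Rightarrow> 'a \<Rightarrow> nat) \<Rightarrow> nat \<Rightarrow> 'a \<Rightarrow> 'a \<Rightarrow> bool" where
  "mono_edge E c i x y \<longleftrightarrow> E x y \<and> c x y = i"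

text \<open>C is (the vertex set of) a connected component of the subgraph formed by all
  edges of colour i and their endpoints; its edges are the colour-i edges inside C.\<close>
definition mono_component :: "('a \<Rightarrow> 'a \<Rightarrow> bool) \<Rightarrow> ('a \<Rightarrow> 'a \<Rightarrow> nat) \<Rightarrow> nat \<Rightarrow> 'a set \<Rightarrow> bool" where
  "mono_component E c i C \<longleftrightarrow>
     (\<exists>v. (\<exists>u. mono_edge E c i v u) \<and> C = {u. (mono_edge E c i)\<^sup>*\<^sup>* v u})"

definition union_edges :: "('a \<Rightarrow> 'a \<Rightarrow> bool) \<Rightarrow> ('a \<Rightarrow> 'a \<Rightarrow> nat) \<Rightarrow> (nat \<times> 'a set) set \<Rightarrow> 'a \<Rightarrow> 'a \<Rightarrow> bool" where
  "union_edges E c S x y \<longleftrightarrow> (\<exists>(i, C) \<in> S. x \<in> C \<and> y \<in> C \<and> mono_edge E c i x y)"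

end

theory Submission
  imports Defs
begin

lemma me_sym:
  assumes "simple_graph V E" "edge_colouring E r c" "mono_edge E c i x y"
  shows "mono_edge E c i y x"
  using assms unfolding simple_graph_def edge_colouring_def mono_edge_def by metis

lemma me_V:
  assumes "simple_graph V E" "mono_edge E c i x y"
  shows "x \<in> V \<and> y \<in> V"
  using assms unfolding simple_graph_def mono_edge_def by blast

lemma me_col:
  assumes "edge_colouring E r c" "mono_edge E c i x y"
  shows "i < r"
  using assms unfolding edge_colouring_def mono_edge_def by blast

lemma me_symp:
  assumes "simple_graph V E" "edge_colouring E r c"
  shows "symp (mono_edge E c i)"
  using me_sym[OF assms] by (meson sympI)

lemma rt_V:
  assumes "simple_graph V E" "(mono_edge E c i)\<^sup>*\<^sup>* v u" "v \<in> V"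
  shows "u \<in> V"
  using assms(2,3)
proof (induction rule: rtranclp_induct)
  case base then show ?case by simp
next
  case (step y z) then show ?case using me_V[OF assms(1)] by blast
qed

lemma rt_sym:
  assumes "simple_graph V E" "edge_colouring E r c" "(mono_edge E c i)\<^sup>*\<^sup>* v u"
  shows "(mono_edge E c i)\<^sup>*\<^sup>* u v"
  using assms(3) sympD[OF symp_rtranclp[OF me_symp[OF assms(1,2)]]] by blast

lemma comp_props:
  assumes "simple_graph V E" "mono_component E c i C"
  shows "C \<subseteq> V" "finite C" "C \<noteq> {}"
proof -
  obtain v where v: "\<exists>u. mono_edge E c i v u" "C = {u. (mono_edge E c i)\<^sup>*\<^sup>* v u}"
    using assms(2) unfolding mono_component_def by blast
  have "v \<in> V" using v(1) me_V[OF assms(1)] by blast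
  then show "C \<subseteq> V" using v(2) rt_V[OF assms(1)] by blast
  then show "finite C" using assms(1) unfolding simple_graph_def by (meson finite_subset)
  show "C \<noteq> {}" using v(2) by blast
qed

lemma comp_eq:
  assumes "simple_graph V E" "edge_colouring E r c" "mono_component E c i C" "x \<in> C"
  shows "C = {u. (mono_edge E c i)\<^sup>*\<^sup>* x u}"
proof -
  obtain v where v: "C = {u. (mono_edge E c i)\<^sup>*\<^sup>* v u}"
    using assms(3) unfolding mono_component_def by blast
  have vx: "(mono_edge E c i)\<^sup>*\<^sup>* v x" using v assms(4) by blast
  have xv: "(mono_edge E c i)\<^sup>*\<^sup>* x v" using rt_sym[OF assms(1,2) vx] .
  show ?thesis using v vx xv by (auto intro: rtranclp_trans)
qed

lemma comp_disj:
  assumes "simple_graph V E" "edge_colouring E r c" "mono_component E c i C"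
    "mono_component E c i D" "C \<noteq> D"
  shows "disjnt C D"
  using comp_eq[OF assms(1,2,3)] comp_eq[OF assms(1,2,4)] assms(5)
  unfolding disjnt_def by blast


theorem lemma6p10:
  fixes V :: "'a set" and E :: "'a \<Rightarrow> 'a \<Rightarrow> bool" and c :: "'a \<Rightarrow> 'a \<Rightarrow> nat"
    and r :: nat and \<delta> \<gamma> :: real
  assumes "simple_graph V E"
    and "edge_colouring E r c"
    and "\<gamma> > 0" and "\<delta> \<ge> \<gamma>"
    and "\<forall>v \<in> V. real (degree V E v) \<ge> \<delta> * real (card V)"
  shows "\<exists>S. finite S \<and> (\<forall>(i, C) \<in> S. mono_component E c i C)
           \<and> real (card S) \<le> real r ^ 2 / \<gamma>
           \<and> (\<Union>(i, C) \<in> S. C) = V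
           \<and> (\<forall>v \<in> V. real (degree V (union_edges E c S) v) \<ge> (\<delta> - \<gamma>) * real (card V))"
proof (cases "V = {}")
  case True
  show ?thesis
    by (rule exI[of _ "{}"]) (use True assms(3) in auto)
next
  case False
  note G = assms(1) and col = assms(2)
  have finV: "finite V" using G unfolding simple_graph_def by blast
  define t where "t = card V"
  have tpos: "t > 0" using False finV t_def by (simp add: card_gt_0_iff)
  obtain v0 where v0: "v0 \<in> V" using False by blast
  have "real (degree V E v0) > 0"
    using assms(5) v0 assms(3,4) tpos unfolding t_def
    by (smt (verit) of_nat_0_less_iff mult_pos_pos)
  then have "{u \<in> V. E v0 u} \<noteq> {}" unfolding degree_def by (metis card.empty of_nat_0 less_irrefl)
  then obtain u0 where "E v0 u0" by blast
  then have rpos: "r > 0" using col unfolding edge_colouring_def by fastforce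
  define comp where "comp i v = {u. (mono_edge E c i)\<^sup>*\<^sup>* v u}" for i v
  define big where "big C \<longleftrightarrow> \<gamma> * real t \<le> real r * real (card C)" for C :: "'a set"
  define B where "B i = {C. mono_component E c i C \<and> big C}" for i
  define S where "S = (SIGMA i:{..<r}. B i)"
  have BV: "B i \<subseteq> Pow V" for i using comp_props(1)[OF G] unfolding B_def by blast
  have finB: "finite (B i)" for i using BV finV by (meson finite_Pow_iff finite_subset)
  have cardB: "real (card (B i)) \<le> real r / \<gamma>" for i
  proof -
    have pw: "pairwise disjnt (B i)" unfolding pairwise_def B_def
      using comp_disj[OF G col] by blast
    have "card (\<Union>(B i)) = sum card (B i)"
      by (rule card_Union_disjoint[OF pw]) (use comp_props(2)[OF G] B_def in blast)
    moreover have "card (\<Union>(B i)) \<le> t" unfolding t_def using BV finV by (intro card_mono) auto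
    ultimately have "sum card (B i) \<le> t" by linarith
    then have s1: "(\<Sum>C\<in>B i. real (card C)) \<le> real t" by (metis of_nat_le_iff of_nat_sum)
    have s2: "(\<Sum>C\<in>B i. \<gamma> * real t) \<le> (\<Sum>C\<in>B i. real r * real (card C))"
      by (rule sum_mono) (auto simp: B_def big_def)
    have s3: "(\<Sum>C\<in>B i. real r * real (card C)) = real r * (\<Sum>C\<in>B i. real (card C))"
      by (rule sum_distrib_left[symmetric])
    have s4: "(\<Sum>C\<in>B i. \<gamma> * real t) = real (card (B i)) * (\<gamma> * real t)" by simp
    have "real r * (\<Sum>C\<in>B i. real (card C)) \<le> real r * real t"
      using s1 by (intro mult_left_mono) auto
    then have "real (card (B i)) * (\<gamma> * real t) \<le> real r * real t"
      using s2 s3 s4 by linarith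
    then have "real (card (B i)) * \<gamma> \<le> real r" using tpos
      by (smt (verit) mult.assoc mult.commute mult_le_cancel_right of_nat_0_less_iff)
    then show ?thesis using assms(3) by (simp add: pos_le_divide_eq)
  qed
  have finS: "finite S" unfolding S_def using finB by auto
  have cardS: "real (card S) \<le> real r ^ 2 / \<gamma>"
  proof -
    have "card S = (\<Sum>i<r. card (B i))" unfolding S_def using finB by simp
    then have "real (card S) = (\<Sum>i<r. real (card (B i)))" by simp
    also have "\<dots> \<le> (\<Sum>i<r. real r / \<gamma>)" by (rule sum_mono) (use cardB in auto)
    also have "\<dots> = real r ^ 2 / \<gamma>" by (simp add: power2_eq_square)
    finally show ?thesis .
  qed
  have compS: "\<forall>(i, C) \<in> S. mono_component E c i C" unfolding S_def B_def by auto
  have ue: "union_edges E c S v u \<longleftrightarrow> E v u \<and> big (comp (c v u) v)" if v: "v \<in> V" for v u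
  proof
    assume "union_edges E c S v u"
    then obtain i C where iC: "(i, C) \<in> S" "v \<in> C" "u \<in> C" "mono_edge E c i v u"
      unfolding union_edges_def by blast
    have "C = comp i v" using comp_eq[OF G col _ iC(2)] iC(1) unfolding S_def B_def comp_def by blast
    moreover have "i = c v u" "E v u" using iC(4) unfolding mono_edge_def by auto
    ultimately show "E v u \<and> big (comp (c v u) v)" using iC(1) unfolding S_def B_def by blast
  next
    assume a: "E v u \<and> big (comp (c v u) v)"
    let ?i = "c v u"
    have me: "mono_edge E c ?i v u" using a unfolding mono_edge_def by simp
    have "?i < r" using me_col[OF col me] .
    moreover have "mono_component E c ?i (comp ?i v)"
      unfolding mono_component_def comp_def using me by blast
    ultimately have "(?i, comp ?i v) \<in> S" using a unfolding S_def B_def by blast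
    moreover have "v \<in> comp ?i v" "u \<in> comp ?i v" unfolding comp_def using me by auto
    ultimately show "union_edges E c S v u" unfolding union_edges_def using me by blast
  qed
  have deg: "real (degree V (union_edges E c S) v) > (\<delta> - \<gamma>) * real t" if v: "v \<in> V" for v
  proof -
    define L where "L i = {u \<in> V. E v u \<and> c v u = i \<and> \<not> big (comp i v)}" for i
    define R where "R = {u \<in> V. union_edges E c S v u}"
    have sub: "{u \<in> V. E v u} \<subseteq> R \<union> (\<Union>i<r. L i)"
      unfolding R_def L_def using ue[OF v] col unfolding edge_colouring_def by auto
    have finL: "finite (L i)" for i unfolding L_def using finV by simp
    have finR: "finite R" unfolding R_def using finV by simp
    have "card {u \<in> V. E v u} \<le> card (R \<union> (\<Union>i<r. L i))"
      by (rule card_mono[OF _ sub]) (use finL finR in auto)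
    also have "\<dots> \<le> card R + card (\<Union>i<r. L i)" by (rule card_Un_le)
    also have "\<dots> \<le> card R + (\<Sum>i<r. card (L i))" using card_UN_le[of "{..<r}" L] by simp
    finally have c1: "real (degree V E v) \<le> real (card R) + (\<Sum>i<r. real (card (L i)))"
      unfolding degree_def by (metis of_nat_le_iff of_nat_add of_nat_sum)
    have Li: "real (card (L i)) < \<gamma> * real t / real r" for i
    proof (cases "big (comp i v)")
      case True
      then have "L i = {}" unfolding L_def by auto
      then show ?thesis using assms(3) tpos rpos by simp
    next
      case False
      have cv: "comp i v \<subseteq> V" unfolding comp_def using rt_V[OF G _ v] by blast
      have "L i \<subseteq> comp i v" unfolding L_def comp_def mono_edge_def by auto
      then have "card (L i) \<le> card (comp i v)" using cv finV by (meson card_mono finite_subset)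
      moreover have "real r * real (card (comp i v)) < \<gamma> * real t" using False unfolding big_def by simp
      ultimately have "real r * real (card (L i)) < \<gamma> * real t"
        by (smt (verit) mult_left_mono of_nat_0_le_iff of_nat_le_iff)
      then show ?thesis using rpos by (simp add: pos_less_divide_eq mult.commute)
    qed
    have "(\<Sum>i<r. real (card (L i))) < (\<Sum>i<r. \<gamma> * real t / real r)"
      by (rule sum_strict_mono) (use Li rpos in auto)
    also have "\<dots> = \<gamma> * real t" using rpos by simp
    finally have "real (degree V E v) < real (card R) + \<gamma> * real t" using c1 by linarith
    moreover have "real (degree V E v) \<ge> \<delta> * real t" using assms(5) v t_def by simp
    ultimately show ?thesis unfolding R_def degree_def by (simp add: algebra_simps)
  qed
  have span: "(\<Union>(i, C) \<in> S. C) = V"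
  proof
    show "(\<Union>(i, C) \<in> S. C) \<subseteq> V" using compS comp_props(1)[OF G] by blast
  next
    show "V \<subseteq> (\<Union>(i, C) \<in> S. C)"
    proof
      fix v assume v: "v \<in> V"
      have "(\<delta> - \<gamma>) * real t \<ge> 0" using assms(4) by simp
      then have "degree V (union_edges E c S) v > 0" using deg[OF v] by linarith
      then obtain u where "union_edges E c S v u" unfolding degree_def
        by (metis (no_types, lifting) card.empty empty_Collect_eq less_irrefl)
      then show "v \<in> (\<Union>(i, C) \<in> S. C)" unfolding union_edges_def by blast
    qed
  qed
  show ?thesis
  proof (intro exI[of _ S] conjI)
    show "\<forall>v\<in>V. (\<delta> - \<gamma>) * real (card V) \<le> real (degree V (union_edges E c S) v)"
      using deg unfolding t_def by (simp add: less_imp_le)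
  qed (use finS compS cardS span in auto)
qed

end
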